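(* Let $G\subset\mathbb{R}^d$ be a bounded domain with $C^3$ boundary, let $f:\bar G\to[0,\infty)$ satisfy: $f_{\min}:=\inf_{x\in\bar G}f(x)>0$, $f$ has a unique minimizer in $\bar G$, and $|f(x)-f(y)|\le L_f|x-y|$ for all $x,y\in\bar G$. Let $\alpha,\beta,\sigma>0$. For $\mu\in\mathcal P(\bar G)$ set $\bar X^\mu=\int_{\bar G}xe^{-\alpha f(x)}\mu(dx)\big/\int_{\bar G}e^{-\alpha f(x)}\mu(dx)$ and define $$b(t,x,\mu)=\beta(x-\bar X^\mu),\qquad\sigma(t,x,\mu)=\sigma\,\mathrm{Diag}(x-\bar X^\mu).$$ Then there exists $L>0$ such that for all $t\ge0$, $x,y\in\bar G$ and $\mu^1,\mu^2\in\mathcal P(\bar G)$, $$|b(t,x,\mu^1)-b(t,y,\mu^2)|+|\sigma(t,x,\mu^1)-\sigma(t,y,\mu^2)|\le L\big(|x-y|+\mathcal W_4(\mu^1,\mu^2)\big),$$ and $b,\sigma$ are continuous in $t$.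
   Context: $\mathcal P(\bar G)$ is the set of Borel probability measures on $\bar G$; $\mathcal W_4$ is the Wasserstein 4-distance; $\mathrm{Diag}(v)$ is the diagonal matrix with diagonal $v$; the matrix norm is the Frobenius norm. *)

theory Defs
  imports "HOL-Analysis.Analysis" "HOL-Probability.Probability"
begin

fun Ck :: "nat \<Rightarrow> ('a::euclidean_space \<Rightarrow> real) \<Rightarrow> 'a set \<Rightarrow> bool" where
  "Ck 0 f S = continuous_on S f"
| "Ck (Suc k) f S =
     ((\<forall>x\<in>S. f differentiable (at x)) \<and>
      (\<forall>v. Ck k (\<lambda>x. frechet_derivative f (at x) v) S))"

definition bounded_domain :: "'a::euclidean_space set \<Rightarrow> bool" where
  "bounded_domain G \<longleftrightarrow> G \<noteq> {} \<and> open G \<and> connected G \<and> bounded G"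

definition Ck_boundary :: "nat \<Rightarrow> 'a::euclidean_space set \<Rightarrow> bool" where
  "Ck_boundary k G \<longleftrightarrow>
     (\<forall>p\<in>frontier G. \<exists>r>0. \<exists>\<phi>::'a \<Rightarrow> real.
        Ck k \<phi> (ball p r) \<and> \<phi> p = 0 \<and> frechet_derivative \<phi> (at p) \<noteq> (\<lambda>v. 0) \<and>
        G \<inter> ball p r = {x \<in> ball p r. \<phi> x < 0})"

definition Pbar :: "'a::euclidean_space set \<Rightarrow> 'a measure set" where
  "Pbar G = {\<mu>. prob_space \<mu> \<and> space \<mu> = closure G \<and>
                 sets \<mu> = sets (restrict_space borel (closure G))}"

definition couplings :: "'a measure \<Rightarrow> 'a measure \<Rightarrow> ('a \<times> 'a) measure set" where
  "couplings \<mu> \<nu> = {\<pi>. prob_space \<pi> \<and> sets \<pi> = sets (\<mu> \<Otimes>\<^sub>M \<nu>) \<and>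
                        distr \<pi> \<mu> fst = \<mu> \<and> distr \<pi> \<nu> snd = \<nu>}"

definition W4 :: "'a::euclidean_space measure \<Rightarrow> 'a measure \<Rightarrow> real" where
  "W4 \<mu> \<nu> = enn2real (INF \<pi>\<in>couplings \<mu> \<nu>.
                 \<integral>\<^sup>+ z. ennreal (dist (fst z) (snd z) ^ 4) \<partial>\<pi>) powr (1/4)"

definition Xbar :: "real \<Rightarrow> ('a::euclidean_space \<Rightarrow> real) \<Rightarrow> 'a measure \<Rightarrow> 'a" where
  "Xbar \<alpha> f \<mu> = (1 / (\<integral>x. exp (- \<alpha> * f x) \<partial>\<mu>)) *\<^sub>R (\<integral>x. exp (- \<alpha> * f x) *\<^sub>R x \<partial>\<mu>)"

definition Diag :: "real^'n \<Rightarrow> real^'n^'n" where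
  "Diag v = (\<chi> i j. if i = j then v $ i else 0)"

definition drift_b :: "real \<Rightarrow> real \<Rightarrow> (real^'n \<Rightarrow> real) \<Rightarrow> real \<Rightarrow> real^'n \<Rightarrow> (real^'n) measure \<Rightarrow> real^'n" where
  "drift_b \<beta> \<alpha> f t x \<mu> = \<beta> *\<^sub>R (x - Xbar \<alpha> f \<mu>)"

definition diffusion_sigma :: "real \<Rightarrow> real \<Rightarrow> (real^'n \<Rightarrow> real) \<Rightarrow> real \<Rightarrow> real^'n \<Rightarrow> (real^'n) measure \<Rightarrow> real^'n^'n" where
  "diffusion_sigma \<sigma> \<alpha> f t x \<mu> = \<sigma> *\<^sub>R Diag (x - Xbar \<alpha> f \<mu>)"

end

theory Submission
  imports Defs
begin


lemma exp_lip0: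
  fixes a b :: real assumes "a \<le> 0" "b \<le> 0"
  shows "\<bar>exp a - exp b\<bar> \<le> \<bar>a - b\<bar>"
proof -
  have key: "exp u - exp v \<le> u - v" if "v \<le> u" "u \<le> 0" for u v :: real
  proof -
    have "exp u - exp v = exp u * (1 - exp (v - u))" by (simp add: algebra_simps exp_diff)
    also have "\<dots> \<le> 1 - exp (v - u)"
      by (rule mult_left_le_one_le) (use that in auto)
    also have "\<dots> \<le> u - v" using exp_ge_add_one_self[of "v - u"] by linarith
    finally show ?thesis .
  qed
  show ?thesis
  proof (cases "b \<le> a")
    case True then show ?thesis using key[of b a] assms by auto
  next
    case False then show ?thesis using key[of a b] assms by auto
  qed
qed

lemma Diag_norm: "norm (Diag v) = norm (v :: real^'n)"
proof -
  have r: "norm (Diag v $ i) = \<bar>v $ i\<bar>" for i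
  proof -
    have "norm (Diag v $ i) = sqrt (\<Sum>j\<in>UNIV. (if i = j then v $ i else 0)\<^sup>2)"
      unfolding norm_vec_def L2_set_def Diag_def by simp
    also have "(\<Sum>j\<in>UNIV. (if i = j then v $ i else 0)\<^sup>2) = (v $ i)\<^sup>2"
    proof -
      have "(\<Sum>j\<in>UNIV. (if i = j then v $ i else 0)\<^sup>2) = (\<Sum>j\<in>UNIV. if i = j then (v $ i)\<^sup>2 else 0)"
        by (rule sum.cong) auto
      then show ?thesis by simp
    qed
    finally show ?thesis by simp
  qed
  show ?thesis unfolding norm_vec_def[of "Diag v"] norm_vec_def[of v] r by simp
qed

lemma distr_pair_snd':
  assumes "prob_space M" "prob_space N"
  shows "distr (M \<Otimes>\<^sub>M N) N snd = N"
proof (intro measure_eqI)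
  interpret N: prob_space N by fact
  interpret M: prob_space M by fact
  interpret P: pair_sigma_finite M N ..
  fix A assume A: "A \<in> sets (distr (M \<Otimes>\<^sub>M N) N snd)"
  from A have "emeasure (distr (M \<Otimes>\<^sub>M N) N snd) A = emeasure (M \<Otimes>\<^sub>M N) (space M \<times> A)"
    by (auto simp add: emeasure_distr space_pair_measure dest: sets.sets_into_space intro!: arg_cong2[where f=emeasure])
  with A show "emeasure (distr (M \<Otimes>\<^sub>M N) N snd) A = emeasure N A"
    using N.emeasure_pair_measure_Times[of "space M" M A, OF sets.top] M.emeasure_space_1 by simp
qed simp

lemma jensen4:
  fixes Z :: "'a \<Rightarrow> real"
  assumes "prob_space M" "integrable M Z" "integrable M (\<lambda>x. (Z x)^4)"
  shows "(\<integral>x. Z x \<partial>M)^4 \<le> (\<integral>x. (Z x)^4 \<partial>M)"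
proof -
  interpret prob_space M by fact
  show ?thesis
    by (rule jensens_inequality[of Z UNIV 0 0 "\<lambda>x. x^4", simplified])
       (use assms convex_power_even[of 4] in auto)
qed

lemma coupling_fst:
  fixes g :: "'a \<Rightarrow> 'b::{banach,second_countable_topology}"
  assumes "\<pi> \<in> couplings \<mu> \<nu>" "g \<in> borel_measurable \<mu>" "integrable \<mu> g"
  shows "integrable \<pi> (\<lambda>z. g (fst z))" "integral\<^sup>L \<mu> g = integral\<^sup>L \<pi> (\<lambda>z. g (fst z))"
proof -
  have s: "sets \<pi> = sets (\<mu> \<Otimes>\<^sub>M \<nu>)" and d: "distr \<pi> \<mu> fst = \<mu>"
    using assms(1) unfolding couplings_def by auto
  have mf: "fst \<in> measurable \<pi> \<mu>"
    using measurable_cong_sets[OF s refl] measurable_fst by blast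
  show "integrable \<pi> (\<lambda>z. g (fst z))"
    using integrable_distr_eq[OF mf assms(2)] d assms(3) by simp
  show "integral\<^sup>L \<mu> g = integral\<^sup>L \<pi> (\<lambda>z. g (fst z))"
    using integral_distr[OF mf assms(2)] d by simp
qed

lemma coupling_snd:
  fixes g :: "'a \<Rightarrow> 'b::{banach,second_countable_topology}"
  assumes "\<pi> \<in> couplings \<mu> \<nu>" "g \<in> borel_measurable \<nu>" "integrable \<nu> g"
  shows "integrable \<pi> (\<lambda>z. g (snd z))" "integral\<^sup>L \<nu> g = integral\<^sup>L \<pi> (\<lambda>z. g (snd z))"
proof -
  have s: "sets \<pi> = sets (\<mu> \<Otimes>\<^sub>M \<nu>)" and d: "distr \<pi> \<nu> snd = \<nu>"
    using assms(1) unfolding couplings_def by auto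
  have mf: "snd \<in> measurable \<pi> \<nu>"
    using measurable_cong_sets[OF s refl] measurable_snd by blast
  show "integrable \<pi> (\<lambda>z. g (snd z))"
    using integrable_distr_eq[OF mf assms(2)] d assms(3) by simp
  show "integral\<^sup>L \<nu> g = integral\<^sup>L \<pi> (\<lambda>z. g (snd z))"
    using integral_distr[OF mf assms(2)] d by simp
qed

lemma coupling_dist_meas:
  fixes \<mu> \<nu> :: "'a::euclidean_space measure"
  assumes "\<pi> \<in> couplings \<mu> \<nu>" "sets \<mu> = sets (restrict_space borel K)"
    "sets \<nu> = sets (restrict_space borel K)"
  shows "(\<lambda>z. dist (fst z) (snd z)) \<in> borel_measurable \<pi>"
proof -
  have s: "sets \<pi> = sets (\<mu> \<Otimes>\<^sub>M \<nu>)"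
    using assms(1) unfolding couplings_def by auto
  have mf: "fst \<in> measurable \<pi> \<mu>" "snd \<in> measurable \<pi> \<nu>"
    using measurable_cong_sets[OF s refl] measurable_fst measurable_snd by blast+
  have "(\<lambda>x. x) \<in> borel_measurable (restrict_space borel K)"
    by (rule borel_measurable_continuous_on_restrict) (rule continuous_on_id)
  then have i: "(\<lambda>x. x) \<in> borel_measurable \<mu>" "(\<lambda>x. x) \<in> borel_measurable \<nu>"
    using measurable_cong_sets[OF assms(2) refl] measurable_cong_sets[OF assms(3) refl] by auto
  have "(\<lambda>z. fst z) \<in> borel_measurable \<pi>" using measurable_compose[OF mf(1) i(1)] by simp
  moreover have "(\<lambda>z. snd z) \<in> borel_measurable \<pi>" using measurable_compose[OF mf(2) i(2)] by simp
  ultimately show ?thesis by (rule borel_measurable_dist)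
qed

lemma coupling_space:
  assumes "\<pi> \<in> couplings \<mu> \<nu>" "space \<mu> = K" "space \<nu> = K"
  shows "space \<pi> = K \<times> K"
proof -
  have s: "sets \<pi> = sets (\<mu> \<Otimes>\<^sub>M \<nu>)"
    using assms(1) unfolding couplings_def by auto
  show ?thesis using sets_eq_imp_space_eq[OF s] assms by (simp add: space_pair_measure)
qed

lemma prod_coupling:
  assumes "prob_space \<mu>" "prob_space \<nu>"
  shows "\<mu> \<Otimes>\<^sub>M \<nu> \<in> couplings \<mu> \<nu>"
  unfolding couplings_def
  using prob_space_pair[OF assms] prob_space.distr_pair_fst[OF assms(2), of \<mu>]
    distr_pair_snd'[OF assms] by auto



lemma meas_basic:
  fixes w :: "'a::euclidean_space \<Rightarrow> real"
  assumes R: "\<forall>x\<in>K. norm x \<le> R" and wb: "\<forall>x\<in>K. m \<le> w x \<and> w x \<le> 1"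
    and m: "0 < m" and wc: "continuous_on K w"
    and P: "prob_space \<mu>" "space \<mu> = K" "sets \<mu> = sets (restrict_space borel K)"
  shows "w \<in> borel_measurable \<mu>" "(\<lambda>x. w x *\<^sub>R x) \<in> borel_measurable \<mu>"
    "integrable \<mu> w" "integrable \<mu> (\<lambda>x. w x *\<^sub>R x)"
    "m \<le> (\<integral>x. w x \<partial>\<mu>)" "norm (\<integral>x. w x *\<^sub>R x \<partial>\<mu>) \<le> R"
proof -
  interpret prob_space \<mu> by fact
  have mc: "measurable (restrict_space borel K) borel = measurable \<mu> borel"
    using measurable_cong_sets[OF P(3)[symmetric] refl] .
  show mw: "w \<in> borel_measurable \<mu>"
    using borel_measurable_continuous_on_restrict[OF wc] mc by blast
  have "continuous_on K (\<lambda>x. w x *\<^sub>R x)" by (intro continuous_intros wc)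
  then show mg: "(\<lambda>x. w x *\<^sub>R x) \<in> borel_measurable \<mu>"
    using borel_measurable_continuous_on_restrict mc by blast
  show iw: "integrable \<mu> w"
    by (rule integrable_const_bound[where B=1]) (use wb m P(2) mw in \<open>auto intro!: AE_I2\<close>)
  have nb: "norm (w x *\<^sub>R x) \<le> R" if "x \<in> K" for x
  proof -
    have "norm (w x *\<^sub>R x) = \<bar>w x\<bar> * norm x" by simp
    also have "\<dots> \<le> 1 * R" using wb R that m
      by (intro mult_mono) auto
    finally show ?thesis by simp
  qed
  show ig: "integrable \<mu> (\<lambda>x. w x *\<^sub>R x)"
    by (rule integrable_const_bound[where B=R]) (use nb P(2) mg in \<open>auto intro!: AE_I2\<close>)
  show "m \<le> (\<integral>x. w x \<partial>\<mu>)"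
    by (rule integral_ge_const[OF iw]) (use wb P(2) in \<open>auto intro!: AE_I2\<close>)
  have "norm (\<integral>x. w x *\<^sub>R x \<partial>\<mu>) \<le> (\<integral>x. norm (w x *\<^sub>R x) \<partial>\<mu>)"
    by (rule integral_norm_bound)
  also have "\<dots> \<le> R"
    by (rule integral_le_const) (use integrable_norm[OF ig] nb P(2) in \<open>auto intro!: AE_I2 simp del: norm_scaleR\<close>)
  finally show "norm (\<integral>x. w x *\<^sub>R x \<partial>\<mu>) \<le> R" .
qed

lemma pt_bound:
  fixes w :: "'a::real_normed_vector \<Rightarrow> real"
  assumes R: "\<forall>x\<in>K. norm x \<le> R" and wb: "\<forall>x\<in>K. m \<le> w x \<and> w x \<le> 1"
    and m: "0 < m" and wl: "\<forall>x\<in>K. \<forall>y\<in>K. \<bar>w x - w y\<bar> \<le> Lw * norm (x - y)"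
    and a: "a \<in> K" and b: "b \<in> K"
  shows "norm (w a *\<^sub>R a - w b *\<^sub>R b) \<le> (Lw * R + 1) * dist a b"
proof -
  have "w a *\<^sub>R a - w b *\<^sub>R b = (w a - w b) *\<^sub>R a + w b *\<^sub>R (a - b)"
    by (simp add: algebra_simps)
  then have "norm (w a *\<^sub>R a - w b *\<^sub>R b) \<le> \<bar>w a - w b\<bar> * norm a + \<bar>w b\<bar> * norm (a - b)"
    by (metis norm_scaleR norm_triangle_ineq real_norm_def)
  also have "\<dots> \<le> (Lw * norm (a - b)) * R + 1 * norm (a - b)"
    using wl a b R wb m order_trans[OF abs_ge_zero wl[rule_format, OF a b]]
    by (intro add_mono mult_mono) auto
  finally show ?thesis by (simp add: dist_norm algebra_simps)
qed



lemma coupling_step: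
  fixes w :: "'a::euclidean_space \<Rightarrow> real"
  assumes R: "\<forall>x\<in>K. norm x \<le> R" and R0: "0 \<le> R" and m: "0 < m"
    and wb: "\<forall>x\<in>K. m \<le> w x \<and> w x \<le> 1"
    and wl: "\<forall>x\<in>K. \<forall>y\<in>K. \<bar>w x - w y\<bar> \<le> Lw * norm (x - y)" and Lw: "0 \<le> Lw"
    and wc: "continuous_on K w"
    and P1: "prob_space \<mu>1" "space \<mu>1 = K" "sets \<mu>1 = sets (restrict_space borel K)"
    and P2: "prob_space \<mu>2" "space \<mu>2 = K" "sets \<mu>2 = sets (restrict_space borel K)"
    and pi: "\<pi> \<in> couplings \<mu>1 \<mu>2"
  defines "C \<equiv> (Lw * R + 1) / m + Lw * R / m^2"
  defines "A \<equiv> norm ((1 / (\<integral>x. w x \<partial>\<mu>1)) *\<^sub>R (\<integral>x. w x *\<^sub>R x \<partial>\<mu>1)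
                   - (1 / (\<integral>x. w x \<partial>\<mu>2)) *\<^sub>R (\<integral>x. w x *\<^sub>R x \<partial>\<mu>2))"
  shows "\<exists>E4. (\<integral>\<^sup>+ z. ennreal (dist (fst z) (snd z) ^ 4) \<partial>\<pi>) = ennreal E4
             \<and> (A / C) ^ 4 \<le> E4"
proof -
  interpret pr: prob_space \<pi> using pi unfolding couplings_def by auto
  note b1 = meas_basic[OF R wb m wc P1]
  note b2 = meas_basic[OF R wb m wc P2]
  define D1 where "D1 = (\<integral>x. w x \<partial>\<mu>1)"
  define D2 where "D2 = (\<integral>x. w x \<partial>\<mu>2)"
  define N1 where "N1 = (\<integral>x. w x *\<^sub>R x \<partial>\<mu>1)"
  define N2 where "N2 = (\<integral>x. w x *\<^sub>R x \<partial>\<mu>2)"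
  have sp: "space \<pi> = K \<times> K" using coupling_space[OF pi P1(2) P2(2)] .
  define d where "d = (\<lambda>z::'a\<times>'a. dist (fst z) (snd z))"
  have md: "d \<in> borel_measurable \<pi>" unfolding d_def
    using coupling_dist_meas[OF pi P1(3) P2(3)] .
  have dle: "d z \<le> 2 * R" if "z \<in> space \<pi>" for z
  proof -
    have "d z \<le> norm (fst z) + norm (snd z)" unfolding d_def dist_norm
      by (rule norm_triangle_ineq4)
    also have "\<dots> \<le> R + R" using R that sp by (intro add_mono) auto
    finally show ?thesis by simp
  qed
  have d0: "0 \<le> d z" for z unfolding d_def by simp
  have id: "integrable \<pi> d"
    by (rule pr.integrable_const_bound[where B="2*R"]) (use dle d0 md in \<open>auto intro!: AE_I2\<close>)
  have d4le: "d z ^ 4 \<le> (2 * R) ^ 4" if "z \<in> space \<pi>" for z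
    using dle[OF that] d0 by (intro power_mono) auto
  have id4: "integrable \<pi> (\<lambda>z. d z ^ 4)"
    by (rule pr.integrable_const_bound[where B="(2*R)^4"]) (use d4le d0 md in \<open>auto intro!: AE_I2\<close>)
  define E where "E = (\<integral>z. d z \<partial>\<pi>)"
  define E4 where "E4 = (\<integral>z. d z ^ 4 \<partial>\<pi>)"
  have nn: "(\<integral>\<^sup>+ z. ennreal (dist (fst z) (snd z) ^ 4) \<partial>\<pi>) = ennreal E4"
    unfolding E4_def using nn_integral_eq_integral[OF id4] d0 unfolding d_def by auto
  have E0: "0 \<le> E" unfolding E_def using d0 by simp
  have jen: "E ^ 4 \<le> E4" unfolding E_def E4_def
    by (rule jensen4) (use id id4 in \<open>auto intro: pr.prob_space_axioms\<close>)
  let ?g = "\<lambda>x. w x *\<^sub>R x"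
  have g1: "integrable \<pi> (\<lambda>z. ?g (fst z))" "N1 = (\<integral>z. ?g (fst z) \<partial>\<pi>)"
    using coupling_fst[OF pi b1(2) b1(4)] unfolding N1_def by auto
  have g2: "integrable \<pi> (\<lambda>z. ?g (snd z))" "N2 = (\<integral>z. ?g (snd z) \<partial>\<pi>)"
    using coupling_snd[OF pi b2(2) b2(4)] unfolding N2_def by auto
  have w1: "integrable \<pi> (\<lambda>z. w (fst z))" "D1 = (\<integral>z. w (fst z) \<partial>\<pi>)"
    using coupling_fst[OF pi b1(1) b1(3)] unfolding D1_def by auto
  have w2: "integrable \<pi> (\<lambda>z. w (snd z))" "D2 = (\<integral>z. w (snd z) \<partial>\<pi>)"
    using coupling_snd[OF pi b2(1) b2(3)] unfolding D2_def by auto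
  have "N1 - N2 = (\<integral>z. ?g (fst z) - ?g (snd z) \<partial>\<pi>)"
    using g1 g2 by simp
  also have "norm \<dots> \<le> (\<integral>z. norm (?g (fst z) - ?g (snd z)) \<partial>\<pi>)"
    by (rule integral_norm_bound)
  also have "\<dots> \<le> (\<integral>z. (Lw * R + 1) * d z \<partial>\<pi>)"
    by (rule integral_mono)
       (use g1 g2 id sp pt_bound[OF R wb m wl] in \<open>auto simp: d_def\<close>)
  also have "\<dots> = (Lw * R + 1) * E" unfolding E_def by simp
  finally have nd: "norm (N1 - N2) \<le> (Lw * R + 1) * E" .
  have "D1 - D2 = (\<integral>z. w (fst z) - w (snd z) \<partial>\<pi>)"
    using w1 w2 by simp
  also have "norm \<dots> \<le> (\<integral>z. norm (w (fst z) - w (snd z)) \<partial>\<pi>)"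
    by (rule integral_norm_bound)
  also have "\<dots> \<le> (\<integral>z. Lw * d z \<partial>\<pi>)"
    by (rule integral_mono)
       (use w1 w2 id sp wl in \<open>auto simp: d_def dist_norm\<close>)
  also have "\<dots> = Lw * E" unfolding E_def by simp
  finally have dd: "\<bar>D1 - D2\<bar> \<le> Lw * E" by simp
  have D1m: "m \<le> D1" and D2m: "m \<le> D2" using b1(5) b2(5) unfolding D1_def D2_def by auto
  have N2R: "norm N2 \<le> R" using b2(6) unfolding N2_def .
  have eq: "(1 / D1) *\<^sub>R N1 - (1 / D2) *\<^sub>R N2
      = (1 / D1) *\<^sub>R (N1 - N2) + ((D2 - D1) / (D1 * D2)) *\<^sub>R N2"
  proof -
    have "(1 / D1) *\<^sub>R N1 - (1 / D2) *\<^sub>R N2 = (1 / D1) *\<^sub>R (N1 - N2) + (1 / D1 - 1 / D2) *\<^sub>R N2"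
      by (simp add: algebra_simps)
    moreover have "1 / D1 - 1 / D2 = (D2 - D1) / (D1 * D2)"
      using D1m D2m m by (simp add: field_simps)
    ultimately show ?thesis by simp
  qed
  have "A = norm ((1 / D1) *\<^sub>R (N1 - N2) + ((D2 - D1) / (D1 * D2)) *\<^sub>R N2)"
    unfolding A_def D1_def[symmetric] D2_def[symmetric] N1_def[symmetric] N2_def[symmetric] eq ..
  also have "\<dots> \<le> (1 / D1) * norm (N1 - N2) + (\<bar>D2 - D1\<bar> / (D1 * D2)) * norm N2"
    using D1m D2m m by (rule_tac order_trans[OF norm_triangle_ineq]) (simp add: abs_mult)
  also have "\<dots> \<le> (1 / m) * ((Lw * R + 1) * E) + ((Lw * E) / (m * m)) * R"
  proof (intro add_mono mult_mono)
    show "1 / D1 \<le> 1 / m" using D1m m by (simp add: frac_le)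
    show "\<bar>D2 - D1\<bar> / (D1 * D2) \<le> Lw * E / (m * m)"
      using dd D1m D2m m Lw E0
      by (intro frac_le) (auto simp: abs_minus_commute intro: mult_mono)
  qed (use nd N2R m E0 Lw D1m D2m in auto)
  also have "\<dots> = C * E" unfolding C_def by (simp add: field_simps power2_eq_square)
  finally have AE: "A \<le> C * E" .
  have C0: "0 < C" unfolding C_def using m Lw R0 mult_nonneg_nonneg[OF Lw R0]
    by (intro add_pos_nonneg divide_pos_pos add_nonneg_pos) auto
  have "A / C \<le> E" using AE C0 by (simp add: divide_le_eq mult.commute)
  moreover have "0 \<le> A / C" unfolding A_def using C0 by simp
  ultimately have "(A / C) ^ 4 \<le> E ^ 4" by (intro power_mono)
  with jen have "(A / C) ^ 4 \<le> E4" by simp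
  with nn show ?thesis by blast
qed



lemma Xbar_lip:
  fixes w :: "'a::euclidean_space \<Rightarrow> real"
  assumes R: "\<forall>x\<in>K. norm x \<le> R" and R0: "0 \<le> R" and m: "0 < m"
    and wb: "\<forall>x\<in>K. m \<le> w x \<and> w x \<le> 1"
    and wl: "\<forall>x\<in>K. \<forall>y\<in>K. \<bar>w x - w y\<bar> \<le> Lw * norm (x - y)" and Lw: "0 \<le> Lw"
    and wc: "continuous_on K w"
    and P1: "prob_space \<mu>1" "space \<mu>1 = K" "sets \<mu>1 = sets (restrict_space borel K)"
    and P2: "prob_space \<mu>2" "space \<mu>2 = K" "sets \<mu>2 = sets (restrict_space borel K)"
  shows "norm ((1 / (\<integral>x. w x \<partial>\<mu>1)) *\<^sub>R (\<integral>x. w x *\<^sub>R x \<partial>\<mu>1)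
                   - (1 / (\<integral>x. w x \<partial>\<mu>2)) *\<^sub>R (\<integral>x. w x *\<^sub>R x \<partial>\<mu>2))
     \<le> ((Lw * R + 1) / m + Lw * R / m^2) * W4 \<mu>1 \<mu>2"
proof -
  define C where "C = (Lw * R + 1) / m + Lw * R / m^2"
  define A where "A = norm ((1 / (\<integral>x. w x \<partial>\<mu>1)) *\<^sub>R (\<integral>x. w x *\<^sub>R x \<partial>\<mu>1)
                   - (1 / (\<integral>x. w x \<partial>\<mu>2)) *\<^sub>R (\<integral>x. w x *\<^sub>R x \<partial>\<mu>2))"
  define I where "I = (INF \<pi>\<in>couplings \<mu>1 \<mu>2. \<integral>\<^sup>+ z. ennreal (dist (fst z) (snd z) ^ 4) \<partial>\<pi>)"
  note st = coupling_step[OF R R0 m wb wl Lw wc P1 P2, folded C_def A_def]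
  have C0: "0 < C" unfolding C_def using m Lw R0 mult_nonneg_nonneg[OF Lw R0]
    by (intro add_pos_nonneg divide_pos_pos add_nonneg_pos) auto
  have A0: "0 \<le> A / C" unfolding A_def using C0 by simp
  have lo: "ennreal ((A / C) ^ 4) \<le> I" unfolding I_def
  proof (rule INF_greatest)
    fix \<pi> assume "\<pi> \<in> couplings \<mu>1 \<mu>2"
    from st[OF this] obtain E4 where
      "(\<integral>\<^sup>+ z. ennreal (dist (fst z) (snd z) ^ 4) \<partial>\<pi>) = ennreal E4" "(A / C) ^ 4 \<le> E4" by blast
    then show "ennreal ((A / C) ^ 4) \<le> (\<integral>\<^sup>+ z. ennreal (dist (fst z) (snd z) ^ 4) \<partial>\<pi>)"
      by (simp add: ennreal_leI)
  qed
  have pc: "\<mu>1 \<Otimes>\<^sub>M \<mu>2 \<in> couplings \<mu>1 \<mu>2" by (rule prod_coupling[OF P1(1) P2(1)])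
  from st[OF pc] obtain E4 where
    e4: "(\<integral>\<^sup>+ z. ennreal (dist (fst z) (snd z) ^ 4) \<partial>(\<mu>1 \<Otimes>\<^sub>M \<mu>2)) = ennreal E4" by blast
  have "I \<le> ennreal E4" unfolding I_def e4[symmetric] by (rule INF_lower[OF pc])
  then have Ifin: "I < top" using order_le_less_trans by fastforce
  have "enn2real (ennreal ((A / C) ^ 4)) \<le> enn2real I"
    by (rule enn2real_mono[OF lo Ifin])
  then have a4: "(A / C) ^ 4 \<le> enn2real I" using A0 by simp
  have "A / C \<le> enn2real I powr (1/4)"
  proof (cases "A / C = 0")
    case True then show ?thesis by (simp only:) simp
  next
    case False
    then have pos: "0 < A / C" using A0 by linarith
    have p4: "(A / C) ^ 4 = (A / C) powr 4" using powr_realpow[OF pos, of 4] by simp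
    have "((A / C) powr 4) powr (1/4) = (A / C) powr (4 * (1/4))" by (rule powr_powr)
    also have "\<dots> = (A / C) powr 1" by (rule arg_cong[where f="\<lambda>t. (A / C) powr t"]) simp
    also have "\<dots> = A / C" by (rule powr_one) (use pos in simp)
    finally have "A / C = ((A / C) ^ 4) powr (1/4)" unfolding p4 by simp
    also have "\<dots> \<le> enn2real I powr (1/4)"
      by (rule powr_mono2) (use a4 pos in auto)
    finally show ?thesis .
  qed
  then have "A \<le> C * enn2real I powr (1/4)" using C0 by (simp add: divide_le_eq mult.commute)
  then show ?thesis unfolding A_def[symmetric] C_def[symmetric] W4_def I_def[symmetric] .
qed



lemma Diag_diff: "Diag a - Diag b = Diag (a - b)"
  by (simp add: Diag_def vec_eq_iff)

theorem lemma3p7: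
  fixes G :: "(real^'n) set" and f :: "real^'n \<Rightarrow> real"
    and \<alpha> \<beta> \<sigma> Lf :: real
  assumes "bounded_domain G" and "Ck_boundary 3 G"
    and "\<forall>x\<in>closure G. f x \<ge> 0"
    and "Inf (f ` closure G) > 0"
    and "\<exists>!x. x \<in> closure G \<and> (\<forall>y\<in>closure G. f x \<le> f y)"
    and "\<forall>x\<in>closure G. \<forall>y\<in>closure G. \<bar>f x - f y\<bar> \<le> Lf * norm (x - y)"
    and "\<alpha> > 0" and "\<beta> > 0" and "\<sigma> > 0"
  shows "\<exists>L>0.
     (\<forall>t\<ge>0. \<forall>x\<in>closure G. \<forall>y\<in>closure G. \<forall>\<mu>1\<in>Pbar G. \<forall>\<mu>2\<in>Pbar G.
        norm (drift_b \<beta> \<alpha> f t x \<mu>1 - drift_b \<beta> \<alpha> f t y \<mu>2)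
        + norm (diffusion_sigma \<sigma> \<alpha> f t x \<mu>1 - diffusion_sigma \<sigma> \<alpha> f t y \<mu>2)
        \<le> L * (norm (x - y) + W4 \<mu>1 \<mu>2))
   \<and> (\<forall>x\<in>closure G. \<forall>\<mu>\<in>Pbar G.
        continuous_on {0..} (\<lambda>t. drift_b \<beta> \<alpha> f t x \<mu>) \<and>
        continuous_on {0..} (\<lambda>t. diffusion_sigma \<sigma> \<alpha> f t x \<mu>))"
proof -
  define K where "K = closure G"
  have bG: "bounded G" and Gne: "G \<noteq> {}" using assms(1) unfolding bounded_domain_def by auto
  have "bounded K" using bG unfolding K_def by (rule bounded_closure)
  then obtain R0 where R0: "\<forall>x\<in>K. norm x \<le> R0" by (auto simp: bounded_iff)
  define R where "R = max R0 0"
  have R: "\<forall>x\<in>K. norm x \<le> R" "0 \<le> R" using R0 unfolding R_def by force+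
  obtain x0 where x0: "x0 \<in> K" using Gne closure_subset unfolding K_def by blast
  define L0 where "L0 = max Lf 0"
  have L0: "0 \<le> L0" unfolding L0_def by simp
  have lip: "\<forall>x\<in>K. \<forall>y\<in>K. \<bar>f x - f y\<bar> \<le> L0 * norm (x - y)"
  proof (intro ballI)
    fix x y assume "x \<in> K" "y \<in> K"
    then have "\<bar>f x - f y\<bar> \<le> Lf * norm (x - y)" using assms(6) unfolding K_def by blast
    also have "\<dots> \<le> L0 * norm (x - y)" unfolding L0_def by (intro mult_right_mono) auto
    finally show "\<bar>f x - f y\<bar> \<le> L0 * norm (x - y)" .
  qed
  have "L0-lipschitz_on K f"
    by (rule lipschitz_onI) (use lip L0 in \<open>auto simp: dist_norm dist_real_def\<close>)
  then have fc: "continuous_on K f" by (rule lipschitz_on_continuous_on)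
  define M where "M = f x0 + L0 * (2 * R)"
  have fM: "f x \<le> M" if "x \<in> K" for x
  proof -
    have "f x \<le> f x0 + L0 * norm (x - x0)" using lip that x0 by force
    also have "norm (x - x0) \<le> 2 * R"
      using norm_triangle_ineq4[of x x0] R(1)[rule_format, OF that] R(1)[rule_format, OF x0] by linarith
    then have "L0 * norm (x - x0) \<le> L0 * (2 * R)" using L0 by (intro mult_left_mono)
    finally show ?thesis unfolding M_def by simp
  qed
  have f0: "0 \<le> f x" if "x \<in> K" for x using assms(3) that unfolding K_def by blast
  define w where "w = (\<lambda>x. exp (- \<alpha> * f x))"
  define m where "m = exp (- \<alpha> * M)"
  have m: "0 < m" unfolding m_def by simp
  have wb: "\<forall>x\<in>K. m \<le> w x \<and> w x \<le> 1"
  proof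
    fix x assume x: "x \<in> K"
    have "- \<alpha> * M \<le> - \<alpha> * f x" using fM[OF x] assms(7) by simp
    moreover have "- \<alpha> * f x \<le> 0" using f0[OF x] assms(7) by simp
    ultimately show "m \<le> w x \<and> w x \<le> 1" unfolding m_def w_def by simp
  qed
  have wl: "\<forall>x\<in>K. \<forall>y\<in>K. \<bar>w x - w y\<bar> \<le> (\<alpha> * L0) * norm (x - y)"
  proof (intro ballI)
    fix x y assume x: "x \<in> K" and y: "y \<in> K"
    have "\<bar>w x - w y\<bar> \<le> \<bar>- \<alpha> * f x - - \<alpha> * f y\<bar>" unfolding w_def
      by (rule exp_lip0) (use f0 x y assms(7) in auto)
    also have "\<dots> = \<alpha> * \<bar>f x - f y\<bar>"
    proof -
      have "- \<alpha> * f x - - \<alpha> * f y = - (\<alpha> * (f x - f y))" by (simp add: algebra_simps)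
      then show ?thesis using assms(7) by (simp only: abs_minus_cancel abs_mult)
    qed
    also have "\<dots> \<le> \<alpha> * (L0 * norm (x - y))" using lip x y assms(7) by (intro mult_left_mono) auto
    finally show "\<bar>w x - w y\<bar> \<le> (\<alpha> * L0) * norm (x - y)" by simp
  qed
  have Lw: "0 \<le> \<alpha> * L0" using L0 assms(7) by simp
  have wc: "continuous_on K w" unfolding w_def by (intro continuous_intros fc)
  define C where "C = (\<alpha> * L0 * R + 1) / m + \<alpha> * L0 * R / m^2"
  have C0: "0 \<le> C" unfolding C_def using m Lw R mult_nonneg_nonneg[OF Lw R(2)] by simp
  have Xl: "norm (Xbar \<alpha> f \<mu>1 - Xbar \<alpha> f \<mu>2) \<le> C * W4 \<mu>1 \<mu>2"
    if "\<mu>1 \<in> Pbar G" "\<mu>2 \<in> Pbar G" for \<mu>1 \<mu>2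
  proof -
    have P1: "prob_space \<mu>1" "space \<mu>1 = K" "sets \<mu>1 = sets (restrict_space borel K)"
      and P2: "prob_space \<mu>2" "space \<mu>2 = K" "sets \<mu>2 = sets (restrict_space borel K)"
      using that unfolding Pbar_def K_def by auto
    show ?thesis
      using Xbar_lip[OF R(1) R(2) m wb wl Lw wc P1 P2]
      unfolding Xbar_def C_def w_def by simp
  qed
  have W0: "0 \<le> W4 \<mu>1 \<mu>2" for \<mu>1 \<mu>2 :: "(real^'n) measure" unfolding W4_def by simp
  define L where "L = (\<beta> + \<sigma>) * (1 + C)"
  have Lpos: "0 < L" unfolding L_def using assms(8,9) C0 by simp
  show ?thesis
  proof (intro exI[of _ L] conjI Lpos allI impI ballI)
    fix t :: real and x y and \<mu>1 \<mu>2
    assume x: "x \<in> closure G" and y: "y \<in> closure G" and mu: "\<mu>1 \<in> Pbar G" "\<mu>2 \<in> Pbar G"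
    define v where "v = (x - y) - (Xbar \<alpha> f \<mu>1 - Xbar \<alpha> f \<mu>2)"
    have e1: "drift_b \<beta> \<alpha> f t x \<mu>1 - drift_b \<beta> \<alpha> f t y \<mu>2 = \<beta> *\<^sub>R v"
      unfolding drift_b_def v_def by (simp add: algebra_simps)
    have e2: "diffusion_sigma \<sigma> \<alpha> f t x \<mu>1 - diffusion_sigma \<sigma> \<alpha> f t y \<mu>2 = \<sigma> *\<^sub>R Diag v"
      unfolding diffusion_sigma_def v_def
      by (simp add: Diag_diff flip: scaleR_diff_right) (simp add: algebra_simps)
    have nv: "norm v \<le> norm (x - y) + C * W4 \<mu>1 \<mu>2"
      using norm_triangle_ineq4[of "x - y" "Xbar \<alpha> f \<mu>1 - Xbar \<alpha> f \<mu>2"] Xl[OF mu]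
      unfolding v_def by linarith
    have "norm (drift_b \<beta> \<alpha> f t x \<mu>1 - drift_b \<beta> \<alpha> f t y \<mu>2)
        + norm (diffusion_sigma \<sigma> \<alpha> f t x \<mu>1 - diffusion_sigma \<sigma> \<alpha> f t y \<mu>2)
        = (\<beta> + \<sigma>) * norm v"
      unfolding e1 e2 using assms(8,9) by (simp add: Diag_norm algebra_simps)
    also have "\<dots> \<le> (\<beta> + \<sigma>) * (norm (x - y) + C * W4 \<mu>1 \<mu>2)"
      using nv assms(8,9) by (intro mult_left_mono) auto
    also have "\<dots> \<le> L * (norm (x - y) + W4 \<mu>1 \<mu>2)"
    proof -
      have "norm (x - y) + C * W4 \<mu>1 \<mu>2 \<le> (1 + C) * (norm (x - y) + W4 \<mu>1 \<mu>2)"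
        using C0 W0[of \<mu>1 \<mu>2] by (simp add: algebra_simps)
      then show ?thesis unfolding L_def using assms(8,9)
        by (simp add: mult.assoc mult_left_mono)
    qed
    finally show "norm (drift_b \<beta> \<alpha> f t x \<mu>1 - drift_b \<beta> \<alpha> f t y \<mu>2)
        + norm (diffusion_sigma \<sigma> \<alpha> f t x \<mu>1 - diffusion_sigma \<sigma> \<alpha> f t y \<mu>2)
        \<le> L * (norm (x - y) + W4 \<mu>1 \<mu>2)" .
  next
    fix x \<mu>
    show "continuous_on {0..} (\<lambda>t. drift_b \<beta> \<alpha> f t x \<mu>)"
      unfolding drift_b_def by (rule continuous_on_const)
    show "continuous_on {0..} (\<lambda>t. diffusion_sigma \<sigma> \<alpha> f t x \<mu>)"
      unfolding diffusion_sigma_def by (rule continuous_on_const)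
  qed
qed

end
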